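(* For $n\geq 1$, $$\sum_{\pi\in\mathfrak{S}_n(2413,3142)}t^{\mathrm{des}(\pi)}=\sum_{T\in \mathfrak{D}\mathfrak{T}_n} t^{n_\ominus(T)}.$$
   Context: $\mathfrak{S}_n(2413,3142)$ is the set of permutations of $[n]$ avoiding the patterns $2413$ and $3142$; $\mathrm{des}(\pi)=\#\{i\in[n-1]:\pi_i>\pi_{i+1}\}$. A binary tree is either empty or consists of a root together with a left subtree and a right subtree, both binary trees. A right chain of a binary tree is a maximal sequence of nodes $v_1,\dots,v_l$ in which $v_1$ is either the root or a left child and each $v_{j+1}$ is the right child of $v_j$. A di-sk tree is a binary tree whose nodes are labelled $\oplus$ or $\ominus$ such that along every right chain the labels alternate. $\mathfrak{D}\mathfrak{T}_n$ is the set of di-sk trees with $n-1$ nodes (for $n=1$ only the empty tree), and $n_\ominus(T)$ is the number of nodes labelled $\ominus$. *)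

theory Defs
  imports Main "HOL-Library.Tree" "HOL-Computational_Algebra.Polynomial"
begin

definition perms_of :: "nat \<Rightarrow> nat list set" where
  "perms_of n = {\<pi>. distinct \<pi> \<and> set \<pi> = {1..n}}"

definition contains_pattern :: "nat list \<Rightarrow> nat list \<Rightarrow> bool" where
  "contains_pattern \<pi> \<sigma> \<longleftrightarrow>
     (\<exists>f::nat \<Rightarrow> nat. (\<forall>a b. a < b \<and> b < length \<sigma> \<longrightarrow> f a < f b)
        \<and> (\<forall>a < length \<sigma>. f a < length \<pi>)
        \<and> (\<forall>a < length \<sigma>. \<forall>b < length \<sigma>.
              (\<pi> ! f a < \<pi> ! f b) \<longleftrightarrow> (\<sigma> ! a < \<sigma> ! b)))"

definition avoiding_perms :: "nat \<Rightarrow> nat list list \<Rightarrow> nat list set" where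
  "avoiding_perms n pats = {\<pi> \<in> perms_of n. \<forall>\<sigma> \<in> set pats. \<not> contains_pattern \<pi> \<sigma>}"

definition des :: "nat list \<Rightarrow> nat" where
  "des \<pi> = card {i. Suc i < length \<pi> \<and> \<pi> ! i > \<pi> ! Suc i}"

text \<open>Labelled binary trees: label True = oplus, False = ominus.\<close>
fun disk :: "bool tree \<Rightarrow> bool" where
  "disk Leaf = True"
| "disk (Node l a r) = (disk l \<and> disk r \<and> (case r of Leaf \<Rightarrow> True | Node _ b _ \<Rightarrow> b \<noteq> a))"

definition disk_trees :: "nat \<Rightarrow> bool tree set" where
  "disk_trees n = {T. disk T \<and> size T = n - 1}"

fun n_ominus :: "bool tree \<Rightarrow> nat" where
  "n_ominus Leaf = 0"
| "n_ominus (Node l a r) = n_ominus l + n_ominus r + (if a then 0 else 1)"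

end

theory Submission
  imports Defs
begin


definition spl :: "bool \<Rightarrow> nat list \<Rightarrow> nat \<Rightarrow> bool" where
  "spl c \<pi> j \<longleftrightarrow> 0 < j \<and> j < length \<pi> \<and>
     (\<forall>i k. i < j \<longrightarrow> j \<le> k \<longrightarrow> k < length \<pi> \<longrightarrow> (\<pi>!i < \<pi>!k) = c)"

lemma spl_hd_last: "spl c \<pi> j \<Longrightarrow> (\<pi>!0 < \<pi>!(length \<pi> - 1)) = c"
proof -
  assume "spl c \<pi> j"
  then have "0 < j" "j < length \<pi>" and h: "\<And>i k. i < j \<Longrightarrow> j \<le> k \<Longrightarrow> k < length \<pi> \<Longrightarrow> (\<pi>!i < \<pi>!k) = c"
    unfolding spl_def by auto
  then show ?thesis using h[of 0 "length \<pi> - 1"] by simp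
qed

lemma spl_append_right:
  assumes "spl c (xs@ys) j" "length xs < j"
  shows "spl c ys (j - length xs)"
  unfolding spl_def
proof (intro conjI allI impI)
  show "0 < j - length xs" using assms(2) by simp
  show "j - length xs < length ys" using assms unfolding spl_def by auto
  fix i k assume "i < j - length xs" "j - length xs \<le> k" "k < length ys"
  then have "((xs@ys)!(i + length xs) < (xs@ys)!(k + length xs)) = c"
    using assms(1) unfolding spl_def by auto
  then show "(ys!i < ys!k) = c" by (simp add: nth_append)
qed

lemma spl_append_combine:
  assumes "spl c (xs@ys) (length xs)" "spl c ys k"
  shows "spl c (xs@ys) (length xs + k)"
  unfolding spl_def
proof (intro conjI allI impI)
  show "0 < length xs + k" using assms(2) unfolding spl_def by simp
  show "length xs + k < length (xs@ys)" using assms(2) unfolding spl_def by simp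
  fix i k' assume h: "i < length xs + k" "length xs + k \<le> k'" "k' < length (xs@ys)"
  show "((xs@ys)!i < (xs@ys)!k') = c"
  proof (cases "i < length xs")
    case True
    then show ?thesis using assms(1) h unfolding spl_def by auto
  next
    case False
    have "(ys!(i - length xs) < ys!(k' - length xs)) = c"
      using assms(2) h False unfolding spl_def by auto
    then show ?thesis using False h by (simp add: nth_append)
  qed
qed

lemma spl_map_plus: "spl c (map (\<lambda>x. x + m) ys) k \<longleftrightarrow> spl c ys k"
  unfolding spl_def by auto

lemma contains_sub:
  assumes "contains_pattern \<pi>' \<sigma>"
    and "\<And>a b. a < b \<Longrightarrow> b < length \<pi>' \<Longrightarrow> g a < g b"
    and "\<And>i. i < length \<pi>' \<Longrightarrow> g i < length \<pi> \<and> \<pi>!(g i) = \<pi>'!i"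
  shows "contains_pattern \<pi> \<sigma>"
proof -
  obtain f where f: "\<forall>a b. a < b \<and> b < length \<sigma> \<longrightarrow> f a < f b"
     "\<forall>a < length \<sigma>. f a < length \<pi>'"
     "\<forall>a < length \<sigma>. \<forall>b < length \<sigma>. (\<pi>' ! f a < \<pi>' ! f b) \<longleftrightarrow> (\<sigma> ! a < \<sigma> ! b)"
    using assms(1) unfolding contains_pattern_def by blast
  show ?thesis unfolding contains_pattern_def
    apply (rule exI[of _ "g \<circ> f"])
    using f assms(2,3) by auto
qed

lemma contains_map_plus:
  "contains_pattern (map (\<lambda>x. x + m) ys) \<sigma> \<longleftrightarrow> contains_pattern ys \<sigma>"
proof
  assume "contains_pattern (map (\<lambda>x. x + m) ys) \<sigma>"
  then obtain f where f: "\<forall>a b. a < b \<and> b < length \<sigma> \<longrightarrow> f a < f b"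
     "\<forall>a < length \<sigma>. f a < length ys"
     "\<forall>a < length \<sigma>. \<forall>b < length \<sigma>. (map (\<lambda>x. x + m) ys ! f a < map (\<lambda>x. x + m) ys ! f b) \<longleftrightarrow> (\<sigma> ! a < \<sigma> ! b)"
    unfolding contains_pattern_def by auto
  show "contains_pattern ys \<sigma>" unfolding contains_pattern_def
    by (rule exI[of _ f]) (use f in auto)
next
  assume "contains_pattern ys \<sigma>"
  then obtain f where f: "\<forall>a b. a < b \<and> b < length \<sigma> \<longrightarrow> f a < f b"
     "\<forall>a < length \<sigma>. f a < length ys"
     "\<forall>a < length \<sigma>. \<forall>b < length \<sigma>. (ys ! f a < ys ! f b) \<longleftrightarrow> (\<sigma> ! a < \<sigma> ! b)"
    unfolding contains_pattern_def by auto
  show "contains_pattern (map (\<lambda>x. x + m) ys) \<sigma>" unfolding contains_pattern_def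
    by (rule exI[of _ f]) (use f in auto)
qed

lemma all4: "(\<forall>a<(4::nat). P a) = (P 0 \<and> P 1 \<and> P 2 \<and> P 3)"
  by (auto simp: less_Suc_eq numeral_eq_Suc)

lemma all4S: "(\<forall>a<Suc(Suc(Suc(Suc 0))). P a) = (P 0 \<and> P 1 \<and> P 2 \<and> P 3)"
  by (auto simp: less_Suc_eq numeral_eq_Suc)

lemma all4bS: "(\<forall>a b. a < b \<and> b < Suc(Suc(Suc(Suc 0))) \<longrightarrow> P a b) = (P 0 1 \<and> P 0 2 \<and> P 0 3 \<and> P 1 2 \<and> P 1 3 \<and> P 2 3)"
  by (auto simp: less_Suc_eq numeral_eq_Suc)

lemma all4b: "(\<forall>a b. a < b \<and> b < (4::nat) \<longrightarrow> P a b) = (P 0 1 \<and> P 0 2 \<and> P 0 3 \<and> P 1 2 \<and> P 1 3 \<and> P 2 3)"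
  by (auto simp: less_Suc_eq numeral_eq_Suc)


lemma contains_2413:
  assumes "i < j" "j < k" "k < l" "l < length \<pi>"
    "\<pi>!k < \<pi>!i" "\<pi>!i < \<pi>!l" "\<pi>!l < \<pi>!j"
  shows "contains_pattern \<pi> [2,4,1,3]"
  unfolding contains_pattern_def
  apply (rule exI[of _ "\<lambda>a. [i,j,k,l]!a"])
  apply (simp only: length_Cons list.size(3) all4S all4bS)
  using assms by simp

lemma contains_3142:
  assumes "i < j" "j < k" "k < l" "l < length \<pi>"
    "\<pi>!j < \<pi>!l" "\<pi>!l < \<pi>!i" "\<pi>!i < \<pi>!k"
  shows "contains_pattern \<pi> [3,1,4,2]"
  unfolding contains_pattern_def
  apply (rule exI[of _ "\<lambda>a. [i,j,k,l]!a"])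
  apply (simp only: length_Cons list.size(3) all4S all4bS)
  using assms by simp



lemma decomp:
  assumes "distinct \<pi>" "2 \<le> length \<pi>" "\<not> contains_pattern \<pi> [2,4,1,3]"
    "\<not> contains_pattern \<pi> [3,1,4,2]"
  shows "\<exists>c j. spl c \<pi> j"
  using assms
proof (induction "length \<pi>" arbitrary: \<pi> rule: less_induct)
  case less
  define n where "n = length \<pi>"
  show ?case
  proof (cases "n = 2")
    case True
    have "\<pi>!0 \<noteq> \<pi>!1" using less.prems(1) True n_def by (simp add: nth_eq_iff_index_eq)
    moreover have "\<And>k::nat. 1 \<le> k \<Longrightarrow> k < 2 \<Longrightarrow> k = 1" by simp
    ultimately have "spl (\<pi>!0 < \<pi>!1) \<pi> 1" using True n_def unfolding spl_def by fastforce
    then show ?thesis by blast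
  next
    case False
    then have n3: "3 \<le> n" using less.prems(2) n_def by simp
    define m where "m = Max (set \<pi>)"
    have "m \<in> set \<pi>" unfolding m_def using n3 n_def by (intro Max_in) auto
    then obtain p where p: "p < n" "\<pi>!p = m" unfolding n_def by (auto simp: in_set_conv_nth)
    have mx: "\<pi>!i < m" if "i < n" "i \<noteq> p" for i
    proof -
      have "\<pi>!i \<le> m" unfolding m_def using that n_def by (intro Max_ge) auto
      moreover have "\<pi>!i \<noteq> \<pi>!p" using that p(1) less.prems(1) n_def by (simp add: nth_eq_iff_index_eq)
      ultimately show ?thesis using p by simp
    qed
    have dst: "\<pi>!i \<noteq> \<pi>!k" if "i < n" "k < n" "i \<noteq> k" for i k
      using that less.prems(1) n_def by (simp add: nth_eq_iff_index_eq)
    define \<pi>' where "\<pi>' = take p \<pi> @ drop (Suc p) \<pi>"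
    have len': "length \<pi>' = n - 1" unfolding \<pi>'_def n_def using p n_def by simp
    have nth1: "\<pi>'!i = \<pi>!i" if "i < p" for i
      unfolding \<pi>'_def using that p n_def by (simp add: nth_append)
    have nth2: "\<pi>'!i = \<pi>!(Suc i)" if "p \<le> i" "i < n - 1" for i
      unfolding \<pi>'_def using that p n_def by (simp add: nth_append)
    have dist': "distinct \<pi>'"
    proof -
      have "\<pi> = take p \<pi> @ \<pi>!p # drop (Suc p) \<pi>" using p(1) n_def by (simp add: id_take_nth_drop)
      then have "distinct (take p \<pi> @ \<pi>!p # drop (Suc p) \<pi>)" using less.prems(1) by simp
      then show ?thesis unfolding \<pi>'_def by simp
    qed
    have sub: "contains_pattern \<pi> \<sigma>" if "contains_pattern \<pi>' \<sigma>" for \<sigma>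
      using that
    proof (rule contains_sub[where g = "\<lambda>i. if i < p then i else Suc i"])
      show "(if a < p then a else Suc a) < (if b < p then b else Suc b)" if "a < b" "b < length \<pi>'" for a b
        using that by auto
      show "(if i < p then i else Suc i) < length \<pi> \<and> \<pi> ! (if i < p then i else Suc i) = \<pi>' ! i"
        if "i < length \<pi>'" for i
        using that len' nth1 nth2 n_def p by auto
    qed
    have "\<exists>c j. spl c \<pi>' j"
    proof (rule less.hyps[of \<pi>'])
      show "length \<pi>' < length \<pi>" "distinct \<pi>'" "2 \<le> length \<pi>'"
        using len' n3 n_def dist' by auto
      show "\<not> contains_pattern \<pi>' [2,4,1,3]" using sub less.prems(3) by blast
      show "\<not> contains_pattern \<pi>' [3,1,4,2]" using sub less.prems(4) by blast
    qed
    then obtain c j where cj: "spl c \<pi>' j" by blast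
    then have j: "0 < j" "j < n - 1"
      and sp: "\<And>i k. i < j \<Longrightarrow> j \<le> k \<Longrightarrow> k < n - 1 \<Longrightarrow> (\<pi>'!i < \<pi>'!k) = c"
      unfolding spl_def using len' by auto
    show ?thesis
    proof (cases c)
      case True
      have sp: "\<And>i k. i < j \<Longrightarrow> j \<le> k \<Longrightarrow> k < n - 1 \<Longrightarrow> \<pi>'!i < \<pi>'!k"
        using sp True by blast
      show ?thesis
      proof (cases "j \<le> p")
        case True
        have "spl True \<pi> j" unfolding spl_def
        proof (intro conjI allI impI)
          show "0 < j" "j < length \<pi>" using j n_def by auto
          fix i k assume h: "i < j" "j \<le> k" "k < length \<pi>"
          show "(\<pi>!i < \<pi>!k) = True"
          proof -
            consider "k = p" | "k < p" | "p < k" by linarith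
            then show ?thesis
            proof cases
              case 1 then show ?thesis using mx[of i] h True p n_def by auto
            next
              case 2 then show ?thesis using sp[of i k] h True nth1 n_def p(1) by auto
            next
              case 3 then show ?thesis using sp[of i "k - 1"] h True nth1 nth2[of "k-1"] n_def by auto
            qed
          qed
        qed
        then show ?thesis by blast
      next
        case jp: False
        show ?thesis
        proof (cases "p = 0")
          case True
          have "spl False \<pi> 1" unfolding spl_def
          proof (intro conjI allI impI)
            show "0 < (1::nat)" "1 < length \<pi>" using n3 n_def by auto
            fix i k :: nat assume h: "i < 1" "1 \<le> k" "k < length \<pi>"
            then have "i = p" using True by simp
            then show "(\<pi>!i < \<pi>!k) = False" using mx[of k] h p n_def by auto
          qed
          then show ?thesis by blast
        next
          case p0: False
          show ?thesis
          proof (cases "\<exists>i k. i < p \<and> p < k \<and> k \<le> j \<and> \<pi>!k < \<pi>!i")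
            case True
            then obtain i k where ik: "i < p" "p < k" "k \<le> j" "\<pi>!k < \<pi>!i" by blast
            have a: "\<pi>!i < \<pi>!(Suc j)" using sp[of i j] nth1[of i] nth2[of j] ik j jp by auto
            have b: "\<pi>!(Suc j) < \<pi>!p" using mx[of "Suc j"] p j jp by auto
            have "contains_pattern \<pi> [2,4,1,3]"
              by (rule contains_2413[of i p k "Suc j"]) (use ik a b j n_def in auto)
            then show ?thesis using less.prems(3) by blast
          next
            case False
            have "spl True \<pi> p" unfolding spl_def
            proof (intro conjI allI impI)
              show "0 < p" "p < length \<pi>" using p0 p n_def by auto
              fix i k assume h: "i < p" "p \<le> k" "k < length \<pi>"
              show "(\<pi>!i < \<pi>!k) = True"
              proof -
                consider "k = p" | "p < k" "k \<le> j" | "j < k" using h by linarith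
                then show ?thesis
                proof cases
                  case 1 then show ?thesis using mx[of i] h p n_def by auto
                next
                  case 2 then show ?thesis using False h dst[of i k] n_def by fastforce
                next
                  case 3 then show ?thesis using sp[of i "k - 1"] h jp nth1 nth2[of "k-1"] n_def by auto
                qed
              qed
            qed
            then show ?thesis by blast
          qed
        qed
      qed
    next
      case False
      have sp: "\<And>i k. i < j \<Longrightarrow> j \<le> k \<Longrightarrow> k < n - 1 \<Longrightarrow> \<not> \<pi>'!i < \<pi>'!k"
        using sp False by blast
      have spg: "\<pi>'!k < \<pi>'!i" if "i < j" "j \<le> k" "k < n - 1" for i k
      proof -
        have "\<pi>'!i \<noteq> \<pi>'!k" using dist' that len' by (simp add: nth_eq_iff_index_eq)
        then show ?thesis using sp[OF that] by auto
      qed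
      show ?thesis
      proof (cases "p \<le> j")
        case True
        have "spl False \<pi> (Suc j)" unfolding spl_def
        proof (intro conjI allI impI)
          show "0 < Suc j" "Suc j < length \<pi>" using j n_def by auto
          fix i k assume h: "i < Suc j" "Suc j \<le> k" "k < length \<pi>"
          have k: "\<pi>!k = \<pi>'!(k - 1)" using nth2[of "k-1"] h True n_def by auto
          show "(\<pi>!i < \<pi>!k) = False"
          proof -
            consider "i = p" | "i < p" | "p < i" by linarith
            then show ?thesis
            proof cases
              case 1 then show ?thesis using mx[of k] h True p n_def by auto
            next
              case 2
              have "\<pi>'!(k-1) < \<pi>'!i" using spg[of i "k - 1"] h True 2 n_def by auto
              then show ?thesis using nth1[of i] 2 k by auto
            next
              case 3
              have "\<pi>'!(k-1) < \<pi>'!(i-1)" using spg[of "i - 1" "k - 1"] h True 3 n_def by auto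
              moreover have "\<pi>'!(i-1) = \<pi>!i" using nth2[of "i-1"] 3 h n_def by auto
              ultimately show ?thesis using k by auto
            qed
          qed
        qed
        then show ?thesis by blast
      next
        case jp: False
        show ?thesis
        proof (cases "p = n - 1")
          case True
          have "spl True \<pi> (n - 1)" unfolding spl_def
          proof (intro conjI allI impI)
            show "0 < n - 1" "n - 1 < length \<pi>" using n3 n_def by auto
            fix i k assume h: "i < n - 1" "n - 1 \<le> k" "k < length \<pi>"
            then have "k = p" using True n_def by simp
            then show "(\<pi>!i < \<pi>!k) = True" using mx[of i] True p h n_def by auto
          qed
          then show ?thesis by blast
        next
          case pn: False
          show ?thesis
          proof (cases "\<exists>k l. j \<le> k \<and> k < p \<and> p < l \<and> l < n \<and> \<pi>!k < \<pi>!l")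
            case True
            then obtain k l where kl: "j \<le> k" "k < p" "p < l" "l < n" "\<pi>!k < \<pi>!l" by blast
            have a: "\<pi>!l < \<pi>!0" using spg[of 0 "l - 1"] nth1[of 0] nth2[of "l-1"] kl j jp by auto
            have b: "\<pi>!0 < \<pi>!p" using mx[of 0] p j jp by auto
            have "contains_pattern \<pi> [3,1,4,2]"
              by (rule contains_3142[of 0 k p l]) (use kl a b j n_def in auto)
            then show ?thesis using less.prems(4) by blast
          next
            case False
            have "spl False \<pi> (Suc p)" unfolding spl_def
            proof (intro conjI allI impI)
              show "0 < Suc p" "Suc p < length \<pi>" using pn p n_def by auto
              fix i k assume h: "i < Suc p" "Suc p \<le> k" "k < length \<pi>"
              show "(\<pi>!i < \<pi>!k) = False"
              proof -
                consider "i = p" | "i < j" | "j \<le> i" "i < p" using h by linarith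
                then show ?thesis
                proof cases
                  case 1 then show ?thesis using mx[of k] h p n_def by auto
                next
                  case 2
                  have "\<pi>'!(k-1) < \<pi>'!i" using spg[of i "k - 1"] h jp 2 n_def by auto
                  moreover have "\<pi>'!(k-1) = \<pi>!k" using nth2[of "k-1"] h jp n_def by auto
                  moreover have "\<pi>'!i = \<pi>!i" using nth1[of i] 2 jp by auto
                  ultimately show ?thesis by auto
                next
                  case 3 then show ?thesis using False h n_def by auto
                qed
              qed
            qed
            then show ?thesis by blast
          qed
        qed
      qed
    qed
  qed
qed



definition oplus :: "nat list \<Rightarrow> nat list \<Rightarrow> nat list" where
  "oplus xs ys = xs @ map (\<lambda>y. y + length xs) ys"

definition ominus :: "nat list \<Rightarrow> nat list \<Rightarrow> nat list" where
  "ominus xs ys = map (\<lambda>x. x + length ys) xs @ ys"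

fun perm_of :: "bool tree \<Rightarrow> nat list" where
  "perm_of Leaf = [1]"
| "perm_of (Node l a r) = (if a then oplus (perm_of l) (perm_of r) else ominus (perm_of l) (perm_of r))"

lemma perms_len: "xs \<in> perms_of a \<Longrightarrow> length xs = a"
proof -
  assume "xs \<in> perms_of a"
  then have "distinct xs" "set xs = {1..a}" unfolding perms_of_def by auto
  then show ?thesis using distinct_card[of xs] by simp
qed

lemma shift_image: "(\<lambda>y. y + a) ` {1..b} = {Suc a..a+b}"
proof
  show "{Suc a..a+b} \<subseteq> (\<lambda>y. y + a) ` {1..b}"
  proof
    fix x assume "x \<in> {Suc a..a+b}"
    then show "x \<in> (\<lambda>y. y + a) ` {1..b}" by (intro image_eqI[of _ _ "x - a"]) auto
  qed
qed auto

lemma perms_oplus: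
  assumes "xs \<in> perms_of a" "ys \<in> perms_of b"
  shows "oplus xs ys \<in> perms_of (a + b)"
proof -
  have la: "length xs = a" using perms_len assms(1) by blast
  have s1: "set xs = {1..a}" "distinct xs" "set ys = {1..b}" "distinct ys"
    using assms unfolding perms_of_def by auto
  have s2: "set (map (\<lambda>y. y + a) ys) = {Suc a..a+b}" using s1 shift_image by simp
  have d2: "distinct (map (\<lambda>y. y + a) ys)" using s1 by (simp add: distinct_map inj_on_def)
  have u: "{1..a} \<union> {Suc a..a+b} = {1..a+b}" by auto
  have di: "set xs \<inter> set (map (\<lambda>y. y + a) ys) = {}" using s1 s2 by auto
  show ?thesis unfolding perms_of_def oplus_def la mem_Collect_eq
    using s1(2) d2 di u s1(1) s2 by (simp only: distinct_append set_append)
qed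

lemma perms_ominus:
  assumes "xs \<in> perms_of a" "ys \<in> perms_of b"
  shows "ominus xs ys \<in> perms_of (a + b)"
proof -
  have lb: "length ys = b" using perms_len assms(2) by blast
  have s1: "set xs = {1..a}" "distinct xs" "set ys = {1..b}" "distinct ys"
    using assms unfolding perms_of_def by auto
  have s2: "set (map (\<lambda>y. y + b) xs) = {Suc b..a+b}" using s1 shift_image[of b a] by (simp add: add.commute)
  have d2: "distinct (map (\<lambda>y. y + b) xs)" using s1 by (simp add: distinct_map inj_on_def)
  have u: "{Suc b..a+b} \<union> {1..b} = {1..a+b}" by auto
  have di: "set (map (\<lambda>y. y + b) xs) \<inter> set ys = {}" using s1 s2 by auto
  show ?thesis unfolding perms_of_def ominus_def lb mem_Collect_eq
    using s1(4) d2 di u s1(3) s2 by (simp only: distinct_append set_append)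
qed

lemma perm_of_perm: "perm_of T \<in> perms_of (Suc (size T))"
proof (induction T)
  case Leaf
  then show ?case by (simp add: perms_of_def)
next
  case (Node l a r)
  then show ?case using perms_oplus[OF Node.IH] perms_ominus[OF Node.IH] by auto
qed

lemma len_perm_of: "length (perm_of T) = Suc (size T)"
  using perm_of_perm perms_len by blast

lemma spl_oplus:
  assumes "xs \<in> perms_of a" "ys \<in> perms_of b" "0 < a" "0 < b"
  shows "spl True (oplus xs ys) a"
proof -
  have la: "length xs = a" "length ys = b" using perms_len assms(1,2) by blast+
  have s1: "set xs = {1..a}" "set ys = {1..b}"
    using assms unfolding perms_of_def by auto
  show ?thesis unfolding spl_def
  proof (intro conjI allI impI)
    show "0 < a" "a < length (oplus xs ys)" using assms la by (auto simp: oplus_def)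
    fix i k assume h: "i < a" "a \<le> k" "k < length (oplus xs ys)"
    have "xs!i \<in> set xs" using h la by simp
    then have "xs!i \<le> a" using s1 by auto
    moreover have "ys!(k-a) \<in> set ys" using h la by (simp add: oplus_def)
    then have "1 \<le> ys!(k-a)" using s1 by auto
    ultimately show "(oplus xs ys ! i < oplus xs ys ! k) = True"
      using h la by (simp add: oplus_def nth_append)
  qed
qed

lemma spl_ominus:
  assumes "xs \<in> perms_of a" "ys \<in> perms_of b" "0 < a" "0 < b"
  shows "spl False (ominus xs ys) a"
proof -
  have la: "length xs = a" "length ys = b" using perms_len assms(1,2) by blast+
  have s1: "set xs = {1..a}" "set ys = {1..b}"
    using assms unfolding perms_of_def by auto
  show ?thesis unfolding spl_def
  proof (intro conjI allI impI)
    show "0 < a" "a < length (ominus xs ys)" using assms la by (auto simp: ominus_def)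
    fix i k assume h: "i < a" "a \<le> k" "k < length (ominus xs ys)"
    have "xs!i \<in> set xs" using h la by simp
    then have "1 \<le> xs!i" using s1 by auto
    moreover have "ys!(k-a) \<in> set ys" using h la by (simp add: ominus_def)
    then have "ys!(k-a) \<le> b" using s1 by auto
    ultimately show "(ominus xs ys ! i < ominus xs ys ! k) = False"
      using h la by (simp add: ominus_def nth_append)
  qed
qed

lemma spl_perm_of: "spl a (perm_of (Node l a r)) (Suc (size l))"
  using spl_oplus[OF perm_of_perm perm_of_perm] spl_ominus[OF perm_of_perm perm_of_perm]
  by (cases a) auto

lemma no_spl:
  assumes "disk (Node l a r)"
  shows "\<not> spl a (perm_of r) k"
proof
  assume s: "spl a (perm_of r) k"
  show False
  proof (cases r)
    case Leaf
    then show False using s unfolding spl_def by auto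
  next
    case (Node r1 b r2)
    then have "b \<noteq> a" using assms by simp
    moreover have "spl b (perm_of r) (Suc (size r1))" using Node spl_perm_of by simp
    ultimately show False using s spl_hd_last by metis
  qed
qed

lemma des_Nil[simp]: "des [] = 0" by (simp add: des_def)

lemma des_Cons: "des (x # xs) = des xs + (if xs \<noteq> [] \<and> hd xs < x then 1 else 0)"
proof -
  have eq: "{i. Suc i < length (x#xs) \<and> (x#xs)!i > (x#xs)!Suc i}
      = {i::nat. i = 0 \<and> xs \<noteq> [] \<and> hd xs < x} \<union> Suc ` {i. Suc i < length xs \<and> xs!i > xs!Suc i}"
  proof (intro set_eqI iffI)
    fix i assume "i \<in> {i. Suc i < length (x#xs) \<and> (x#xs)!i > (x#xs)!Suc i}"
    then show "i \<in> {i::nat. i = 0 \<and> xs \<noteq> [] \<and> hd xs < x} \<union> Suc ` {i. Suc i < length xs \<and> xs!i > xs!Suc i}"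
      by (cases i) (auto simp: hd_conv_nth)
  next
    fix i assume "i \<in> {i::nat. i = 0 \<and> xs \<noteq> [] \<and> hd xs < x} \<union> Suc ` {i. Suc i < length xs \<and> xs!i > xs!Suc i}"
    then show "i \<in> {i. Suc i < length (x#xs) \<and> (x#xs)!i > (x#xs)!Suc i}"
      by (auto simp: hd_conv_nth)
  qed
  have f: "finite {i. Suc i < length xs \<and> xs!i > xs!Suc i}" by (rule finite_subset[of _ "{..<length xs}"]) auto
  have "des (x#xs) = card ({i::nat. i = 0 \<and> xs \<noteq> [] \<and> hd xs < x} \<union> Suc ` {i. Suc i < length xs \<and> xs!i > xs!Suc i})"
    unfolding des_def eq ..
  also have "\<dots> = card {i::nat. i = 0 \<and> xs \<noteq> [] \<and> hd xs < x} + card (Suc ` {i. Suc i < length xs \<and> xs!i > xs!Suc i})"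
    using f by (intro card_Un_disjoint) auto
  also have "card (Suc ` {i. Suc i < length xs \<and> xs!i > xs!Suc i}) = des xs"
    unfolding des_def by (simp add: card_image)
  also have "card {i::nat. i = 0 \<and> xs \<noteq> [] \<and> hd xs < x} = (if xs \<noteq> [] \<and> hd xs < x then 1 else 0)"
    by auto
  finally show ?thesis by simp
qed

lemma des_append: "xs \<noteq> [] \<Longrightarrow> ys \<noteq> [] \<Longrightarrow>
  des (xs @ ys) = des xs + des ys + (if hd ys < last xs then 1 else 0)"
proof (induction xs)
  case Nil
  then show ?case by simp
next
  case (Cons x xs)
  show ?case
  proof (cases "xs = []")
    case True
    then show ?thesis using des_Cons[of x ys] des_Cons[of x "[]"] Cons.prems by simp
  next
    case False
    then show ?thesis using des_Cons[of x "xs @ ys"] des_Cons[of x xs] Cons.IH Cons.prems by simp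
  qed
qed

lemma des_map_plus: "des (map (\<lambda>x. x + m) xs) = des xs"
  unfolding des_def by (rule arg_cong[where f=card]) auto

lemma des_perm_of: "des (perm_of T) = n_ominus T"
proof (induction T)
  case Leaf
  then show ?case by (simp add: des_def)
next
  case (Node l a r)
  have pl: "perm_of l \<in> perms_of (Suc (size l))" and pr: "perm_of r \<in> perms_of (Suc (size r))"
    using perm_of_perm by blast+
  have ll: "length (perm_of l) = Suc (size l)" and lr: "length (perm_of r) = Suc (size r)"
    using len_perm_of by blast+
  have ne: "perm_of l \<noteq> []" "perm_of r \<noteq> []" using ll lr by auto
  have sl: "set (perm_of l) = {1..Suc (size l)}" and sr: "set (perm_of r) = {1..Suc (size r)}"
    using pl pr unfolding perms_of_def by auto
  have "last (perm_of l) \<in> set (perm_of l)" "hd (perm_of r) \<in> set (perm_of r)" using ne by auto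
  then have b: "last (perm_of l) \<le> Suc (size l)" "1 \<le> last (perm_of l)"
    "hd (perm_of r) \<le> Suc (size r)" "1 \<le> hd (perm_of r)" using sl sr by auto
  show ?case
  proof (cases a)
    case True
    then show ?thesis using des_append[of "perm_of l" "map (\<lambda>y. y + length (perm_of l)) (perm_of r)"]
      ne b ll Node.IH des_map_plus[of "Suc (size l)" "perm_of r"] by (simp add: oplus_def hd_map)
  next
    case False
    then show ?thesis using des_append[of "map (\<lambda>y. y + length (perm_of r)) (perm_of l)" "perm_of r"]
      ne b lr Node.IH des_map_plus[of "Suc (size r)" "perm_of l"] by (simp add: ominus_def last_map)
  qed
qed



lemma avoid_app:
  assumes "contains_pattern (xs@ys) \<sigma>"
    and c: "\<forall>x\<in>set xs. \<forall>y\<in>set ys. (x < y) = c"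
    and ind: "\<And>k. 0 < k \<Longrightarrow> k < length \<sigma> \<Longrightarrow> \<exists>a b. a < k \<and> k \<le> b \<and> b < length \<sigma> \<and> (\<sigma>!a < \<sigma>!b) \<noteq> c"
  shows "contains_pattern xs \<sigma> \<or> contains_pattern ys \<sigma>"
proof -
  obtain f where f1: "\<forall>a b. a < b \<and> b < length \<sigma> \<longrightarrow> f a < f b"
     and f2: "\<forall>a < length \<sigma>. f a < length (xs@ys)"
     and f3: "\<forall>a < length \<sigma>. \<forall>b < length \<sigma>. ((xs@ys) ! f a < (xs@ys) ! f b) \<longleftrightarrow> (\<sigma> ! a < \<sigma> ! b)"
    using assms(1) unfolding contains_pattern_def by blast
  have f1': "f a < f b" if "a < b" "b < length \<sigma>" for a b using f1 that by blast
  have f3': "((xs@ys) ! f a < (xs@ys) ! f b) = (\<sigma> ! a < \<sigma> ! b)" if "a < length \<sigma>" "b < length \<sigma>" for a b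
    using f3 that by blast
  have mono: "f a \<le> f b" if "a \<le> b" "b < length \<sigma>" for a b
  proof (cases "a = b")
    case False
    then have "a < b" using that by simp
    then have "f a < f b" using f1 that(2) by blast
    then show ?thesis by simp
  qed simp
  define L where "L = length \<sigma>"
  show ?thesis
  proof (cases "L = 0")
    case True
    then have "contains_pattern xs \<sigma>" unfolding contains_pattern_def L_def by auto
    then show ?thesis by blast
  next
    case L0: False
    show ?thesis
    proof (cases "length xs \<le> f 0")
      case True
      have ge: "length xs \<le> f a" if "a < L" for a using mono[of 0 a] that True L_def by auto
      have "contains_pattern ys \<sigma>" unfolding contains_pattern_def
      proof (rule exI[of _ "\<lambda>a. f a - length xs"], intro conjI allI impI)
        fix a b assume "a < b \<and> b < length \<sigma>"
        then have "f a < f b" "length xs \<le> f a" using f1' ge[of a] L_def by auto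
        then show "f a - length xs < f b - length xs" by linarith
      next
        fix a assume "a < length \<sigma>"
        then show "f a - length xs < length ys" using f2 ge[of a] L_def by fastforce
      next
        fix a b assume h: "a < length \<sigma>" "b < length \<sigma>"
        then show "(ys ! (f a - length xs) < ys ! (f b - length xs)) = (\<sigma> ! a < \<sigma> ! b)"
          using f3'[of a b] ge[of a] ge[of b] L_def by (auto simp: nth_append)
      qed
      then show ?thesis by blast
    next
      case f0: False
      show ?thesis
      proof (cases "f (L - 1) < length xs")
        case True
        have lt: "f a < length xs" if "a < L" for a
        proof -
          have "a \<le> L - 1" "L - 1 < length \<sigma>" using that L_def L0 by auto
          then show ?thesis using mono[of a "L - 1"] True L_def by auto
        qed
        have "contains_pattern xs \<sigma>" unfolding contains_pattern_def
        proof (rule exI[of _ f], intro conjI allI impI)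
          fix a b assume "a < b \<and> b < length \<sigma>"
          then show "f a < f b" using f1' by auto
        next
          fix a assume "a < length \<sigma>"
          then show "f a < length xs" using lt L_def by auto
        next
          fix a b assume h: "a < length \<sigma>" "b < length \<sigma>"
          then show "(xs ! f a < xs ! f b) = (\<sigma> ! a < \<sigma> ! b)"
            using f3'[of a b] lt[of a] lt[of b] L_def by (auto simp: nth_append)
        qed
        then show ?thesis by blast
      next
        case False
        define k where "k = (LEAST k. length xs \<le> f k)"
        have k1: "length xs \<le> f k" unfolding k_def by (rule LeastI[of _ "L - 1"]) (use False in auto)
        have k2: "k \<le> L - 1" unfolding k_def by (rule Least_le) (use False in auto)
        have k3: "f a < length xs" if "a < k" for a using not_less_Least[of a "\<lambda>k. length xs \<le> f k"] that k_def by auto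
        have "k \<noteq> 0" using k1 f0 by (cases k) auto
        then obtain a b where ab: "a < k" "k \<le> b" "b < length \<sigma>" "(\<sigma>!a < \<sigma>!b) \<noteq> c"
        proof -
          have "k < length \<sigma>" using k2 L0 L_def by linarith
          then show ?thesis using ind[of k] \<open>k \<noteq> 0\<close> that by blast
        qed
        have fa: "f a < length xs" using k3 ab by auto
        have fb: "length xs \<le> f b" using mono[of k b] ab k1 by auto
        have fb2: "f b < length (xs@ys)" using f2 ab by auto
        have "xs ! f a \<in> set xs" using fa by simp
        moreover have "ys ! (f b - length xs) \<in> set ys" using fb fb2 by simp
        ultimately have "(xs ! f a < ys ! (f b - length xs)) = c" using c by blast
        moreover have "((xs@ys) ! f a < (xs@ys) ! f b) = (\<sigma>!a < \<sigma>!b)" using f3'[of a b] ab k2 L_def by auto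
        ultimately show ?thesis using fa fb ab by (simp add: nth_append)
      qed
    qed
  qed
qed

lemma indec_A_True: "0 < k \<Longrightarrow> k < length [2,4,1,3::nat] \<Longrightarrow> \<exists>a b. a < k \<and> k \<le> b \<and> b < length [2,4,1,3::nat] \<and> ([2,4,1,3::nat]!a < [2,4,1,3::nat]!b) \<noteq> True"
proof -
  assume "0 < k" "k < length [2,4,1,3::nat]"
  then have "k = 1 \<or> k = 2 \<or> k = 3" by auto
  then show ?thesis
  proof (elim disjE)
    assume "k = 1" then show ?thesis by (intro exI[of _ 0] exI[of _ 2]) simp
  next
    assume "k = 2" then show ?thesis by (intro exI[of _ 0] exI[of _ 2]) simp
  next
    assume "k = 3" then show ?thesis by (intro exI[of _ 1] exI[of _ 3]) simp
  qed
qed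

lemma indec_A_False: "0 < k \<Longrightarrow> k < length [2,4,1,3::nat] \<Longrightarrow> \<exists>a b. a < k \<and> k \<le> b \<and> b < length [2,4,1,3::nat] \<and> ([2,4,1,3::nat]!a < [2,4,1,3::nat]!b) \<noteq> False"
proof -
  assume "0 < k" "k < length [2,4,1,3::nat]"
  then have "k = 1 \<or> k = 2 \<or> k = 3" by auto
  then show ?thesis
  proof (elim disjE)
    assume "k = 1" then show ?thesis by (intro exI[of _ 0] exI[of _ 1]) simp
  next
    assume "k = 2" then show ?thesis by (intro exI[of _ 0] exI[of _ 3]) simp
  next
    assume "k = 3" then show ?thesis by (intro exI[of _ 0] exI[of _ 3]) simp
  qed
qed

lemma indec_B_True: "0 < k \<Longrightarrow> k < length [3,1,4,2::nat] \<Longrightarrow> \<exists>a b. a < k \<and> k \<le> b \<and> b < length [3,1,4,2::nat] \<and> ([3,1,4,2::nat]!a < [3,1,4,2::nat]!b) \<noteq> True"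
proof -
  assume "0 < k" "k < length [3,1,4,2::nat]"
  then have "k = 1 \<or> k = 2 \<or> k = 3" by auto
  then show ?thesis
  proof (elim disjE)
    assume "k = 1" then show ?thesis by (intro exI[of _ 0] exI[of _ 1]) simp
  next
    assume "k = 2" then show ?thesis by (intro exI[of _ 0] exI[of _ 3]) simp
  next
    assume "k = 3" then show ?thesis by (intro exI[of _ 0] exI[of _ 3]) simp
  qed
qed

lemma indec_B_False: "0 < k \<Longrightarrow> k < length [3,1,4,2::nat] \<Longrightarrow> \<exists>a b. a < k \<and> k \<le> b \<and> b < length [3,1,4,2::nat] \<and> ([3,1,4,2::nat]!a < [3,1,4,2::nat]!b) \<noteq> False"
proof -
  assume "0 < k" "k < length [3,1,4,2::nat]"
  then have "k = 1 \<or> k = 2 \<or> k = 3" by auto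
  then show ?thesis
  proof (elim disjE)
    assume "k = 1" then show ?thesis by (intro exI[of _ 0] exI[of _ 2]) simp
  next
    assume "k = 2" then show ?thesis by (intro exI[of _ 0] exI[of _ 2]) simp
  next
    assume "k = 3" then show ?thesis by (intro exI[of _ 1] exI[of _ 3]) simp
  qed
qed

lemma avoid_pats_perm_of:
  "\<not> contains_pattern (perm_of T) [2,4,1,3] \<and> \<not> contains_pattern (perm_of T) [3,1,4,2]"
proof (induction T)
  case Leaf
  have "\<not> contains_pattern [1] \<sigma>" if "length \<sigma> = 4" for \<sigma> :: "nat list"
  proof
    assume "contains_pattern [1] \<sigma>"
    then obtain f where f1: "\<forall>a b. a < b \<and> b < length \<sigma> \<longrightarrow> f a < f b"
      and f2: "\<forall>a < length \<sigma>. f a < length [1::nat]"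
      unfolding contains_pattern_def by blast
    have "f 0 < f 1" using f1 that by auto
    moreover have "f 1 < 1" using f2 that by auto
    ultimately show False by simp
  qed
  then show ?case by simp
next
  case (Node l a r)
  let ?P = "perm_of l" and ?Q = "perm_of r"
  have sl: "set ?P = {1..Suc (size l)}" and sr: "set ?Q = {1..Suc (size r)}"
    using perm_of_perm unfolding perms_of_def by blast+
  have ll: "length ?P = Suc (size l)" and lr: "length ?Q = Suc (size r)"
    using len_perm_of by blast+
  show ?case
  proof (cases a)
    case True
    have c: "\<forall>x\<in>set ?P. \<forall>y\<in>set (map (\<lambda>y. y + length ?P) ?Q). (x < y) = True"
      using sl sr ll by fastforce
    have "\<not> contains_pattern (?P @ map (\<lambda>y. y + length ?P) ?Q) [2,4,1,3]"
      using avoid_app[OF _ c indec_A_True] Node.IH contains_map_plus by blast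
    moreover have "\<not> contains_pattern (?P @ map (\<lambda>y. y + length ?P) ?Q) [3,1,4,2]"
      using avoid_app[OF _ c indec_B_True] Node.IH contains_map_plus by blast
    ultimately show ?thesis using True by (simp add: oplus_def)
  next
    case False
    have c: "\<forall>x\<in>set (map (\<lambda>y. y + length ?Q) ?P). \<forall>y\<in>set ?Q. (x < y) = False"
      using sl sr lr by fastforce
    have "\<not> contains_pattern (map (\<lambda>y. y + length ?Q) ?P @ ?Q) [2,4,1,3]"
      using avoid_app[OF _ c indec_A_False] Node.IH contains_map_plus by blast
    moreover have "\<not> contains_pattern (map (\<lambda>y. y + length ?Q) ?P @ ?Q) [3,1,4,2]"
      using avoid_app[OF _ c indec_B_False] Node.IH contains_map_plus by blast
    ultimately show ?thesis using False by (simp add: ominus_def)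
  qed
qed



lemma node_decomp:
  "\<exists>A B. perm_of (Node l a r) = A @ B \<and> length A = Suc (size l) \<and>
    (\<forall>k c. spl c B k \<longrightarrow> spl c (perm_of r) k)"
proof (cases a)
  case True
  have "perm_of (Node l a r) = perm_of l @ map (\<lambda>y. y + length (perm_of l)) (perm_of r)"
    using True by (simp add: oplus_def)
  moreover have "length (perm_of l) = Suc (size l)" by (simp add: len_perm_of)
  moreover have "\<forall>k c. spl c (map (\<lambda>y. y + length (perm_of l)) (perm_of r)) k \<longrightarrow> spl c (perm_of r) k"
    by (simp only: spl_map_plus) simp
  ultimately show ?thesis by blast
next
  case False
  have "perm_of (Node l a r) = map (\<lambda>y. y + length (perm_of r)) (perm_of l) @ perm_of r"
    using False by (simp add: ominus_def)
  moreover have "length (map (\<lambda>y. y + length (perm_of r)) (perm_of l)) = Suc (size l)" by (simp add: len_perm_of)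
  ultimately show ?thesis by blast
qed

lemma no_later_split:
  assumes "disk (Node l a r)" "spl a (perm_of (Node l a r)) j"
  shows "j \<le> Suc (size l)"
proof (rule ccontr)
  assume "\<not> j \<le> Suc (size l)"
  obtain A B where AB: "perm_of (Node l a r) = A @ B" "length A = Suc (size l)"
    "\<And>k c. spl c B k \<Longrightarrow> spl c (perm_of r) k" using node_decomp[of l a r] by blast
  have "spl a B (j - length A)" using spl_append_right[of a A B j] assms(2) AB \<open>\<not> j \<le> Suc (size l)\<close> by auto
  then have "spl a (perm_of r) (j - length A)" using AB(3) by blast
  then show False using no_spl[OF assms(1)] by blast
qed

lemma perm_of_inj: "disk T1 \<Longrightarrow> disk T2 \<Longrightarrow> perm_of T1 = perm_of T2 \<Longrightarrow> T1 = T2"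
proof (induction T1 arbitrary: T2)
  case Leaf
  have "length (perm_of T2) = 1" by (simp add: Leaf.prems(3)[symmetric])
  then have "size T2 = 0" using len_perm_of[of T2] by simp
  then show ?case by (cases T2) auto
next
  case (Node l a r)
  show ?case
  proof (cases T2)
    case Leaf
    then show ?thesis using Node.prems len_perm_of[of "Node l a r"] by auto
  next
    case (Node l' a' r')
    let ?\<pi> = "perm_of (Node l a r)"
    have s1: "spl a ?\<pi> (Suc (size l))" by (rule spl_perm_of)
    have s2: "spl a' ?\<pi> (Suc (size l'))" using spl_perm_of[of a' l' r'] Node Node.prems by simp
    have aa: "a' = a" using spl_hd_last[OF s1] spl_hd_last[OF s2] by simp
    have d1: "disk (Node l a r)" and d2: "disk (Node l' a r')" using Node.prems Node aa by auto
    have A: "Suc (size l') \<le> Suc (size l)" using no_later_split[OF d1 s2[unfolded aa]] .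
    have e: "perm_of (Node l' a r') = ?\<pi>" using Node.prems Node aa by simp
    have "Suc (size l) \<le> Suc (size l')"
      using no_later_split[OF d2, of "Suc (size l)"] s1 unfolding e .
    with A have sz: "size l = size l'" by simp
    have ll: "length (perm_of l) = length (perm_of l')" using sz len_perm_of by simp
    have eq: "perm_of (Node l a r) = perm_of (Node l' a r')" using Node.prems Node aa by simp
    have pq: "perm_of l = perm_of l' \<and> perm_of r = perm_of r'"
    proof (cases a)
      case True
      then have "perm_of l @ map (\<lambda>y. y + length (perm_of l)) (perm_of r)
          = perm_of l' @ map (\<lambda>y. y + length (perm_of l')) (perm_of r')"
        using eq by (simp add: oplus_def)
      then have "perm_of l = perm_of l'" and m: "map (\<lambda>y. y + length (perm_of l)) (perm_of r)
          = map (\<lambda>y. y + length (perm_of l)) (perm_of r')"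
        using ll by (auto simp: append_eq_append_conv)
      moreover have "perm_of r = perm_of r'"
        using m by (rule inj_map_eq_map[THEN iffD1, rotated]) (simp add: inj_def)
      ultimately show ?thesis by simp
    next
      case False
      have lr: "length (perm_of r) = length (perm_of r')"
        using eq len_perm_of[of "Node l a r"] len_perm_of[of "Node l' a r'"] sz len_perm_of[of r] len_perm_of[of r'] by simp
      from False have "map (\<lambda>y. y + length (perm_of r)) (perm_of l) @ perm_of r
          = map (\<lambda>y. y + length (perm_of r')) (perm_of l') @ perm_of r'"
        using eq by (simp add: ominus_def)
      then have m: "map (\<lambda>y. y + length (perm_of r)) (perm_of l) = map (\<lambda>y. y + length (perm_of r)) (perm_of l')"
        and "perm_of r = perm_of r'"
        using ll lr by (auto simp: append_eq_append_conv)
      moreover have "perm_of l = perm_of l'"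
        using m by (rule inj_map_eq_map[THEN iffD1, rotated]) (simp add: inj_def)
      ultimately show ?thesis by simp
    qed
    have "l = l'" using Node.IH(1)[of l'] pq d1 d2 by auto
    moreover have "r = r'" using Node.IH(2)[of r'] pq d1 d2 by auto
    ultimately show ?thesis using Node aa by simp
  qed
qed



lemma low_set:
  assumes "A \<union> B = {1..n}" "A \<inter> B = {}" "\<forall>a\<in>A. \<forall>b\<in>B. a < b"
  shows "A = {1..card A}"
proof -
  have fA: "finite A" using assms(1) by (metis finite_Un finite_atLeastAtMost)
  have cA: "card A \<le> n" using card_mono[of "{1..n}" A] assms(1) by auto
  have sub: "{1..card A} \<subseteq> A"
  proof
    fix v assume v: "v \<in> {1..card A}"
    show "v \<in> A"
    proof (rule ccontr)
      assume "v \<notin> A"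
      then have "v \<in> B" using v cA assms(1) by auto
      then have "A \<subseteq> {1..v - 1}" using assms(1,3) by fastforce
      then have "card A \<le> v - 1" using card_mono[of "{1..v-1}" A] by simp
      then show False using v by auto
    qed
  qed
  show ?thesis using card_subset_eq[OF fA sub] by simp
qed

lemma set_take_nth: "x \<in> set (take j xs) \<Longrightarrow> \<exists>i<j. i < length xs \<and> x = xs!i"
  by (auto simp: in_set_conv_nth)

lemma set_drop_nth: "x \<in> set (drop j xs) \<Longrightarrow> \<exists>k\<ge>j. k < length xs \<and> x = xs!k"
  by (auto simp: in_set_conv_nth) (metis add.commute le_add2 less_diff_conv)

lemma unshift:
  assumes "set xs = {Suc m..m + b}"
  shows "map (\<lambda>y. y + m) (map (\<lambda>x. x - m) xs) = xs" "distinct xs \<Longrightarrow> map (\<lambda>x. x - m) xs \<in> perms_of b"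
proof -
  show e: "map (\<lambda>y. y + m) (map (\<lambda>x. x - m) xs) = xs"
    using assms by (auto intro!: map_idI)
  assume d: "distinct xs"
  let ?ys = "map (\<lambda>x. x - m) xs"
  have "distinct (map (\<lambda>y. y + m) ?ys)" using e d by simp
  then have dy: "distinct ?ys" using distinct_map[of "\<lambda>y. y + m" ?ys] by blast
  have "(\<lambda>y. y + m) ` set ?ys = set xs" using e by (metis set_map)
  also have "\<dots> = (\<lambda>y. y + m) ` {1..b}" using assms shift_image[of m b] by simp
  finally have "set ?ys = {1..b}" by (rule inj_image_eq_iff[THEN iffD1, rotated]) (simp add: inj_def)
  then show "?ys \<in> perms_of b" using dy unfolding perms_of_def by simp
qed

abbreviation "pats \<equiv> [[2,4,1,3],[3,1,4,2::nat]]"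

lemma avoids_iff: "\<pi> \<in> avoiding_perms n pats \<longleftrightarrow>
   \<pi> \<in> perms_of n \<and> \<not> contains_pattern \<pi> [2,4,1,3] \<and> \<not> contains_pattern \<pi> [3,1,4,2]"
  unfolding avoiding_perms_def by auto

lemma surj_perm_of:
  assumes "\<pi> \<in> avoiding_perms n pats" "1 \<le> n"
  shows "\<exists>T. disk T \<and> size T = n - 1 \<and> perm_of T = \<pi>"
  using assms
proof (induction n arbitrary: \<pi> rule: less_induct)
  case (less n)
  have pn: "\<pi> \<in> perms_of n" and av1: "\<not> contains_pattern \<pi> [2,4,1,3]" and av2: "\<not> contains_pattern \<pi> [3,1,4,2]"
    using less.prems(1) avoids_iff by auto
  have ln: "length \<pi> = n" using pn perms_len by blast
  have dist: "distinct \<pi>" and st: "set \<pi> = {1..n}" using pn unfolding perms_of_def by auto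
  show ?case
  proof (cases "n = 1")
    case True
    then obtain x where "\<pi> = [x]" using ln by (cases \<pi>) auto
    then have "\<pi> = [1]" using st True by simp
    then show ?thesis using True by (intro exI[of _ Leaf]) simp
  next
    case False
    then have n2: "2 \<le> n" using less.prems(2) by simp
    obtain c j0 where "spl c \<pi> j0" using decomp[OF dist _ av1 av2] n2 ln by auto
    define J where "J = {j. spl c \<pi> j}"
    have fJ: "finite J" unfolding J_def spl_def by (rule finite_subset[of _ "{..<length \<pi>}"]) auto
    define j where "j = Max J"
    have sj: "spl c \<pi> j" using Max_in[OF fJ] \<open>spl c \<pi> j0\<close> unfolding j_def J_def by auto
    have maxj: "j' \<le> j" if "spl c \<pi> j'" for j' using Max_ge[OF fJ] that unfolding j_def J_def by auto
    have j: "0 < j" "j < n" using sj ln unfolding spl_def by auto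
    have spj: "(\<pi>!i < \<pi>!k) = c" if "i < j" "j \<le> k" "k < n" for i k using sj that ln unfolding spl_def by auto
    have tdu: "set (take j \<pi>) \<union> set (drop j \<pi>) = {1..n}" using st by (metis set_append append_take_drop_id)
    have tdi: "set (take j \<pi>) \<inter> set (drop j \<pi>) = {}" using dist by (metis distinct_append append_take_drop_id)
    have dt: "distinct (take j \<pi>)" "distinct (drop j \<pi>)" using dist by auto
    have ct: "card (set (take j \<pi>)) = j" using dt distinct_card[of "take j \<pi>"] j ln by simp
    have cd: "card (set (drop j \<pi>)) = n - j" using dt distinct_card[of "drop j \<pi>"] j ln by simp
    have subt: "contains_pattern \<pi> \<sigma>" if "contains_pattern (take j \<pi>) \<sigma>" for \<sigma>
      by (rule contains_sub[OF that, of id]) auto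
    have subd: "contains_pattern \<pi> \<sigma>" if "contains_pattern (drop j \<pi>) \<sigma>" for \<sigma>
      by (rule contains_sub[OF that, of "\<lambda>i. i + j"]) (auto simp: add.commute)
    show ?thesis
    proof (cases c)
      case True
      have lt: "\<forall>a\<in>set (take j \<pi>). \<forall>b\<in>set (drop j \<pi>). a < b"
      proof (intro ballI)
        fix a b assume "a \<in> set (take j \<pi>)" "b \<in> set (drop j \<pi>)"
        then obtain i k where "i < j" "a = \<pi>!i" "j \<le> k" "k < n" "b = \<pi>!k"
          using set_take_nth set_drop_nth ln by metis
        then show "a < b" using spj True by auto
      qed
      have sA: "set (take j \<pi>) = {1..j}" using low_set[OF tdu tdi lt] ct by simp
      have "set (drop j \<pi>) = {1..n} - set (take j \<pi>)" using tdu tdi by blast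
      then have sB: "set (drop j \<pi>) = {Suc j..j + (n - j)}" using sA j by auto
      define \<alpha> where "\<alpha> = take j \<pi>"
      define \<beta> where "\<beta> = map (\<lambda>x. x - j) (drop j \<pi>)"
      have pa: "\<alpha> \<in> perms_of j" using sA dt unfolding \<alpha>_def perms_of_def by simp
      have pb: "\<beta> \<in> perms_of (n - j)" using unshift(2)[OF sB dt(2)] unfolding \<beta>_def .
      have mb: "map (\<lambda>y. y + j) \<beta> = drop j \<pi>" using unshift(1)[OF sB] unfolding \<beta>_def .
      have la: "length \<alpha> = j" using pa perms_len by blast
      have "oplus \<alpha> \<beta> = \<alpha> @ drop j \<pi>" unfolding oplus_def la mb ..
      then have pi: "\<pi> = oplus \<alpha> \<beta>" by (simp add: \<alpha>_def)
      have "\<alpha> \<in> avoiding_perms j pats" using pa subt av1 av2 unfolding avoids_iff \<alpha>_def by blast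
      then have "\<exists>T. disk T \<and> size T = j - 1 \<and> perm_of T = \<alpha>"
        by (intro less.IH) (use j in auto)
      then obtain l where l: "disk l" "size l = j - 1" "perm_of l = \<alpha>" by blast
      have "\<not> contains_pattern \<beta> \<sigma>" if "\<not> contains_pattern \<pi> \<sigma>" for \<sigma>
        using that subd contains_map_plus[of j \<beta> \<sigma>] mb by auto
      then have "\<beta> \<in> avoiding_perms (n - j) pats" using pb av1 av2 unfolding avoids_iff by blast
      then have "\<exists>T. disk T \<and> size T = n - j - 1 \<and> perm_of T = \<beta>"
        by (intro less.IH) (use j in auto)
      then obtain r where r: "disk r" "size r = n - j - 1" "perm_of r = \<beta>" by blast
      have rr: "case r of Leaf \<Rightarrow> True | Node _ b _ \<Rightarrow> b \<noteq> True"
      proof (cases r)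
        case (Node r1 b r2)
        show ?thesis
        proof (rule ccontr)
          assume "\<not> ?thesis"
          then have b: "b = True" using Node by simp
          have "spl True \<beta> (Suc (size r1))" using spl_perm_of[of True r1 r2] r(3) Node b by simp
          then have X: "spl True (map (\<lambda>y. y + length \<alpha>) \<beta>) (Suc (size r1))" by (simp only: spl_map_plus)
          have Y: "spl True (\<alpha> @ map (\<lambda>y. y + length \<alpha>) \<beta>) (length \<alpha>)"
            using sj True pi unfolding oplus_def la by simp
          have "spl True (\<alpha> @ map (\<lambda>y. y + length \<alpha>) \<beta>) (length \<alpha> + Suc (size r1))"
            by (rule spl_append_combine[OF Y X])
          then have "spl c \<pi> (j + Suc (size r1))" using True pi la unfolding oplus_def by simp
          then show False using maxj by fastforce
        qed
      qed simp
      show ?thesis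
        by (rule exI[of _ "Node l True r"]) (use l r rr pi j in auto)
    next
      case False
      have lt: "\<forall>a\<in>set (drop j \<pi>). \<forall>b\<in>set (take j \<pi>). a < b"
      proof (intro ballI)
        fix a b assume "a \<in> set (drop j \<pi>)" "b \<in> set (take j \<pi>)"
        then obtain i k where ik: "i < j" "b = \<pi>!i" "j \<le> k" "k < n" "a = \<pi>!k"
          using set_take_nth set_drop_nth ln by metis
        then have "\<pi>!i \<noteq> \<pi>!k" using dist ln j by (simp add: nth_eq_iff_index_eq)
        then show "a < b" using spj[of i k] False ik by auto
      qed
      have u2: "set (drop j \<pi>) \<union> set (take j \<pi>) = {1..n}" using tdu by blast
      have i2: "set (drop j \<pi>) \<inter> set (take j \<pi>) = {}" using tdi by blast
      have sB: "set (drop j \<pi>) = {1..n - j}" using low_set[OF u2 i2 lt] cd by simp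
      have "set (take j \<pi>) = {1..n} - set (drop j \<pi>)" using tdu tdi by blast
      then have sA: "set (take j \<pi>) = {Suc (n - j)..(n - j) + j}" using sB j by auto
      define \<beta> where "\<beta> = drop j \<pi>"
      define \<alpha> where "\<alpha> = map (\<lambda>x. x - (n - j)) (take j \<pi>)"
      have pb: "\<beta> \<in> perms_of (n - j)" using sB dt unfolding \<beta>_def perms_of_def by simp
      have pa: "\<alpha> \<in> perms_of j" using unshift(2)[OF sA dt(1)] unfolding \<alpha>_def .
      have ma: "map (\<lambda>y. y + (n - j)) \<alpha> = take j \<pi>" using unshift(1)[OF sA] unfolding \<alpha>_def .
      have lb: "length \<beta> = n - j" using pb perms_len by blast
      have "ominus \<alpha> \<beta> = take j \<pi> @ \<beta>" unfolding ominus_def lb ma ..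
      then have pi: "\<pi> = ominus \<alpha> \<beta>" by (simp add: \<beta>_def)
      have "\<not> contains_pattern \<alpha> \<sigma>" if "\<not> contains_pattern \<pi> \<sigma>" for \<sigma>
        using that subt contains_map_plus[of "n - j" \<alpha> \<sigma>] ma by auto
      then have "\<alpha> \<in> avoiding_perms j pats" using pa av1 av2 unfolding avoids_iff by blast
      then have "\<exists>T. disk T \<and> size T = j - 1 \<and> perm_of T = \<alpha>"
        by (intro less.IH) (use j in auto)
      then obtain l where l: "disk l" "size l = j - 1" "perm_of l = \<alpha>" by blast
      have "\<beta> \<in> avoiding_perms (n - j) pats" using pb subd av1 av2 unfolding avoids_iff \<beta>_def by blast
      then have "\<exists>T. disk T \<and> size T = n - j - 1 \<and> perm_of T = \<beta>"
        by (intro less.IH) (use j in auto)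
      then obtain r where r: "disk r" "size r = n - j - 1" "perm_of r = \<beta>" by blast
      have la: "length (map (\<lambda>y. y + length \<beta>) \<alpha>) = j" using pa perms_len by simp
      have rr: "case r of Leaf \<Rightarrow> True | Node _ b _ \<Rightarrow> b \<noteq> False"
      proof (cases r)
        case (Node r1 b r2)
        show ?thesis
        proof (rule ccontr)
          assume "\<not> ?thesis"
          then have b: "b = False" using Node by simp
          have s1: "spl False \<beta> (Suc (size r1))" using spl_perm_of[of False r1 r2] r(3) Node b by simp
          have "spl False (map (\<lambda>y. y + length \<beta>) \<alpha> @ \<beta>) (length (map (\<lambda>y. y + length \<beta>) \<alpha>))"
            using sj False pi la unfolding ominus_def by simp
          then have "spl False (map (\<lambda>y. y + length \<beta>) \<alpha> @ \<beta>) (length (map (\<lambda>y. y + length \<beta>) \<alpha>) + Suc (size r1))"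
            using s1 by (rule spl_append_combine)
          then have "spl c \<pi> (j + Suc (size r1))" using False pi la unfolding ominus_def by simp
          then show False using maxj by fastforce
        qed
      qed simp
      show ?thesis
        by (rule exI[of _ "Node l False r"]) (use l r rr pi j in auto)
    qed
  qed
qed



theorem corollary2p16:
  fixes n :: nat
  assumes "n \<ge> 1"
  shows "(\<Sum>\<pi>\<in>avoiding_perms n [[2,4,1,3],[3,1,4,2]]. [:0,1::int:] ^ des \<pi>)
       = (\<Sum>T\<in>disk_trees n. [:0,1::int:] ^ n_ominus T)"
proof -
  have bij: "bij_betw perm_of (disk_trees n) (avoiding_perms n pats)"
    unfolding bij_betw_def
  proof
    show "inj_on perm_of (disk_trees n)" unfolding inj_on_def disk_trees_def using perm_of_inj by auto
    show "perm_of ` disk_trees n = avoiding_perms n pats"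
    proof
      show "perm_of ` disk_trees n \<subseteq> avoiding_perms n pats"
      proof
        fix \<pi> assume "\<pi> \<in> perm_of ` disk_trees n"
        then obtain T where T: "disk T" "size T = n - 1" "\<pi> = perm_of T" unfolding disk_trees_def by auto
        have "Suc (size T) = n" using T assms by simp
        then show "\<pi> \<in> avoiding_perms n pats" unfolding avoids_iff
          using T perm_of_perm[of T] avoid_pats_perm_of[of T] by auto
      qed
      show "avoiding_perms n pats \<subseteq> perm_of ` disk_trees n"
      proof
        fix \<pi> assume "\<pi> \<in> avoiding_perms n pats"
        then obtain T where "disk T" "size T = n - 1" "perm_of T = \<pi>" using surj_perm_of assms by blast
        then show "\<pi> \<in> perm_of ` disk_trees n" unfolding disk_trees_def by auto
      qed
    qed
  qed
  have "(\<Sum>\<pi>\<in>avoiding_perms n pats. [:0,1::int:] ^ des \<pi>) = (\<Sum>T\<in>disk_trees n. [:0,1::int:] ^ des (perm_of T))"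
    using sum.reindex_bij_betw[OF bij, of "\<lambda>\<pi>. [:0,1::int:] ^ des \<pi>"] by simp
  also have "\<dots> = (\<Sum>T\<in>disk_trees n. [:0,1::int:] ^ n_ominus T)" by (simp add: des_perm_of)
  finally show ?thesis .
qed

end
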